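(* Let $A$ be a finite nonempty set. The monoid $T=\{\mathrm{id}_A\}\cup C$ is u-closed.
   Context: $C$ is the set of all constant unary maps on $A$. A translation of an $n$-ary operation $f$ on $A$ is $x\mapsto f(a_1,\dots,a_{i-1},x,a_{i+1},\dots,a_n)$ with fixed $a_j\in A$; $\mathrm{trl}(f)$ is the set of translations ($\{f\}$ for unary $f$); $N^*:=\{f\mid\mathrm{trl}(f)\subseteq N\}$ for $N\subseteq A^A$. The u-closure $\overline M$ of $M\subseteq A^A$ is the intersection of all monoids $N$ with $M\subseteq N\le A^A$ such that $N^*$ is a clone; $M$ is u-closed if $\overline M=M$. *)

theory Defs
  imports "HOL-Library.FuncSet"
begin

definition unary_maps :: "'a set \<Rightarrow> ('a \<Rightarrow> 'a) set" where
  "unary_maps A = A \<rightarrow>\<^sub>E A"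

definition tuples :: "'a set \<Rightarrow> nat \<Rightarrow> 'a list set" where
  "tuples A n = {xs. length xs = n \<and> set xs \<subseteq> A}"

definition ops :: "'a set \<Rightarrow> (nat \<times> ('a list \<Rightarrow> 'a)) set" where
  "ops A = {(n, f). n \<ge> 1 \<and> f \<in> tuples A n \<rightarrow>\<^sub>E A}"

definition monoid_on :: "'a set \<Rightarrow> ('a \<Rightarrow> 'a) set \<Rightarrow> bool" where
  "monoid_on A N \<longleftrightarrow> N \<subseteq> unary_maps A \<and> restrict id A \<in> N \<and>
     (\<forall>f\<in>N. \<forall>g\<in>N. restrict (f \<circ> g) A \<in> N)"

definition projection :: "'a set \<Rightarrow> nat \<Rightarrow> nat \<Rightarrow> 'a list \<Rightarrow> 'a" where
  "projection A n i = restrict (\<lambda>xs. xs ! i) (tuples A n)"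

definition clone :: "'a set \<Rightarrow> (nat \<times> ('a list \<Rightarrow> 'a)) set \<Rightarrow> bool" where
  "clone A F \<longleftrightarrow> F \<subseteq> ops A \<and>
     (\<forall>n i. 1 \<le> n \<and> i < n \<longrightarrow> (n, projection A n i) \<in> F) \<and>
     (\<forall>n f m gs. (n, f) \<in> F \<and> length gs = n \<and> (\<forall>g\<in>set gs. (m, g) \<in> F) \<longrightarrow>
        (m, restrict (\<lambda>xs. f (map (\<lambda>g. g xs) gs)) (tuples A m)) \<in> F)"

text \<open>Translations: x \<mapsto> f(a_1,\<dots>,a_{i-1},x,a_{i+1},\<dots>,a_n) with all a_j \<in> A.
  For unary f this gives exactly {f}.\<close>
definition trl :: "'a set \<Rightarrow> nat \<times> ('a list \<Rightarrow> 'a) \<Rightarrow> ('a \<Rightarrow> 'a) set" where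
  "trl A nf = (case nf of (n, f) \<Rightarrow>
     {restrict (\<lambda>x. f (as[i := x])) A | as i. as \<in> tuples A n \<and> i < n})"

definition star :: "'a set \<Rightarrow> ('a \<Rightarrow> 'a) set \<Rightarrow> (nat \<times> ('a list \<Rightarrow> 'a)) set" where
  "star A N = {nf \<in> ops A. trl A nf \<subseteq> N}"

definition u_closure :: "'a set \<Rightarrow> ('a \<Rightarrow> 'a) set \<Rightarrow> ('a \<Rightarrow> 'a) set" where
  "u_closure A M = \<Inter>{N. M \<subseteq> N \<and> monoid_on A N \<and> clone A (star A N)}"

definition u_closed :: "'a set \<Rightarrow> ('a \<Rightarrow> 'a) set \<Rightarrow> bool" where
  "u_closed A M \<longleftrightarrow> u_closure A M = M"

definition constants :: "'a set \<Rightarrow> ('a \<Rightarrow> 'a) set" where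
  "constants A = {restrict (\<lambda>_. c) A | c. c \<in> A}"

end

theory Submission
  imports Defs
begin

definition PT :: "'a set \<Rightarrow> ('a \<Rightarrow> 'a) \<Rightarrow> bool" where
  "PT A u \<longleftrightarrow> (\<forall>x\<in>A. u x = x) \<or> (\<exists>c\<in>A. \<forall>x\<in>A. u x = c)"

lemma memT:
  "restrict u A \<in> insert (restrict id A) (constants A) \<longleftrightarrow> PT A u"
proof
  assume "restrict u A \<in> insert (restrict id A) (constants A)"
  then consider "restrict u A = restrict id A" | c where "c \<in> A" "restrict u A = restrict (\<lambda>_. c) A"
    unfolding constants_def by blast
  then show "PT A u"
  proof cases
    case 1
    then show ?thesis unfolding PT_def by (metis id_apply restrict_apply')
  next
    case 2
    then show ?thesis unfolding PT_def by (metis restrict_apply')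
  qed
next
  assume "PT A u"
  then consider "\<forall>x\<in>A. u x = x" | c where "c \<in> A" "\<forall>x\<in>A. u x = c" unfolding PT_def by blast
  then show "restrict u A \<in> insert (restrict id A) (constants A)"
  proof cases
    case 1
    then have "restrict u A = restrict id A" by (intro restrict_ext) simp
    then show ?thesis by simp
  next
    case 2
    then have "restrict u A = restrict (\<lambda>_. c) A" by (intro restrict_ext) simp
    then show ?thesis using 2 unfolding constants_def by blast
  qed
qed

lemma diag:
  assumes ne: "A \<noteq> {}"
    and rows: "\<And>x. x \<in> A \<Longrightarrow> PT A (\<lambda>y. \<psi> x y)"
    and cols: "\<And>y. y \<in> A \<Longrightarrow> PT A (\<lambda>x. \<psi> x y)"
  shows "PT A (\<lambda>x. \<psi> x x)"
proof (cases "\<exists>a\<in>A. \<forall>y\<in>A. \<psi> a y = y")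
  case True
  then obtain a where a: "a \<in> A" "\<forall>y\<in>A. \<psi> a y = y" by blast
  have "\<psi> b b = b" if b: "b \<in> A" for b
    using cols[OF b] a b unfolding PT_def by metis
  then show ?thesis unfolding PT_def by blast
next
  case F1: False
  show ?thesis
  proof (cases "\<exists>b\<in>A. \<forall>x\<in>A. \<psi> x b = x")
    case True
    then obtain b where b: "b \<in> A" "\<forall>x\<in>A. \<psi> x b = x" by blast
    have "\<psi> a a = a" if a: "a \<in> A" for a
      using rows[OF a] b a unfolding PT_def by metis
    then show ?thesis unfolding PT_def by blast
  next
    case F2: False
    obtain a0 where a0: "a0 \<in> A" using ne by blast
    from rows[OF a0] F1 a0 obtain c where c: "c \<in> A" "\<forall>y\<in>A. \<psi> a0 y = c"
      unfolding PT_def by blast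
    have "\<psi> x x = c" if x: "x \<in> A" for x
    proof -
      from cols[OF x] F2 x obtain k where k: "k \<in> A" "\<forall>z\<in>A. \<psi> z x = k"
        unfolding PT_def by blast
      then show ?thesis using c a0 x by metis
    qed
    then show ?thesis unfolding PT_def using c by blast
  qed
qed

definition fill :: "'a list \<Rightarrow> nat set \<Rightarrow> 'a \<Rightarrow> 'a list" where
  "fill as S x = map (\<lambda>i. if i \<in> S then x else as ! i) [0..<length as]"

lemma fill_empty[simp]: "fill as {} x = as"
  unfolding fill_def by (simp add: map_nth)

lemma length_fill[simp]: "length (fill as S x) = length as"
  unfolding fill_def by simp

lemma nth_fill: "i < length as \<Longrightarrow> fill as S x ! i = (if i \<in> S then x else as ! i)"
  unfolding fill_def by simp

lemma fill_tuples: "as \<in> tuples A n \<Longrightarrow> x \<in> A \<Longrightarrow> fill as S x \<in> tuples A n"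
  unfolding tuples_def fill_def by auto

lemma fill_insert: "k \<notin> S \<Longrightarrow> k < length as \<Longrightarrow>
   fill (as[k:=y]) S x = (fill as S x)[k:=y]"
  by (rule nth_equalityI) (auto simp: nth_fill nth_list_update)

lemma fill_insert2: "k < length as \<Longrightarrow>
   fill as (insert k S) x = fill (as[k:=x]) S x"
  by (rule nth_equalityI) (auto simp: nth_fill nth_list_update)

lemma fill_main:
  assumes ne: "A \<noteq> {}"
    and fA: "f \<in> tuples A n \<rightarrow>\<^sub>E A"
    and tr: "\<And>as i. as \<in> tuples A n \<Longrightarrow> i < n \<Longrightarrow> PT A (\<lambda>x. f (as[i:=x]))"
    and fin: "finite S"
  shows "S \<subseteq> {..<n} \<Longrightarrow> as \<in> tuples A n \<Longrightarrow> PT A (\<lambda>x. f (fill as S x))"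
  using fin
proof (induction S arbitrary: as)
  case empty
  have "f as \<in> A" using fA empty by auto
  then show ?case unfolding PT_def by auto
next
  case (insert k S)
  have kn: "k < n" using insert by auto
  have len: "length as = n" using insert unfolding tuples_def by auto
  have eq: "fill as (insert k S) x = fill (as[k:=x]) S x" for x
    using fill_insert2 kn len by metis
  have "PT A (\<lambda>x. f (fill (as[k:=x]) S x))"
  proof (rule diag[OF ne, where \<psi>="\<lambda>x y. f (fill (as[k:=y]) S x)"])
    fix x assume x: "x \<in> A"
    have "fill (as[k:=y]) S x = (fill as S x)[k:=y]" for y
      using fill_insert insert kn len by metis
    moreover have "PT A (\<lambda>y. f ((fill as S x)[k:=y]))"
      using tr[OF fill_tuples[OF insert(5) x] kn] .
    ultimately show "PT A (\<lambda>y. f (fill (as[k:=y]) S x))" by simp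
  next
    fix y assume y: "y \<in> A"
    have "as[k:=y] \<in> tuples A n" using insert(5) y unfolding tuples_def
      by (auto dest: set_update_subset_insert[THEN subsetD])
    then show "PT A (\<lambda>x. f (fill (as[k:=y]) S x))"
      using insert by auto
  qed
  then show ?case using eq by simp
qed

lemma PT_cong: "(\<And>x. x \<in> A \<Longrightarrow> u x = v x) \<Longrightarrow> PT A u \<Longrightarrow> PT A v"
  unfolding PT_def by auto

lemma PT_cong': "PT A u \<Longrightarrow> (\<And>x. x \<in> A \<Longrightarrow> v x = u x) \<Longrightarrow> PT A v"
  unfolding PT_def by auto

lemma star_iff: "(n, f) \<in> star A (insert (restrict id A) (constants A)) \<longleftrightarrow>
  (n, f) \<in> ops A \<and> (\<forall>as i. as \<in> tuples A n \<and> i < n \<longrightarrow> PT A (\<lambda>x. f (as[i:=x])))"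
proof -
  have "(n, f) \<in> star A (insert (restrict id A) (constants A)) \<longleftrightarrow>
    (n, f) \<in> ops A \<and> (\<forall>as i. as \<in> tuples A n \<and> i < n \<longrightarrow>
       restrict (\<lambda>x. f (as[i:=x])) A \<in> insert (restrict id A) (constants A))"
    unfolding star_def trl_def by blast
  then show ?thesis by (simp only: memT)
qed

lemma tuples_upd: "xs \<in> tuples A m \<Longrightarrow> x \<in> A \<Longrightarrow> xs[j:=x] \<in> tuples A m"
  unfolding tuples_def by (auto dest: set_update_subset_insert[THEN subsetD])

lemma monoid_T: "monoid_on A (insert (restrict id A) (constants A))"
  unfolding monoid_on_def
proof (intro conjI ballI)
  show "insert (restrict id A) (constants A) \<subseteq> unary_maps A"
    unfolding unary_maps_def constants_def by auto
  show "restrict id A \<in> insert (restrict id A) (constants A)" by simp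
  fix f g assume f: "f \<in> insert (restrict id A) (constants A)"
    and g: "g \<in> insert (restrict id A) (constants A)"
  have pf: "PT A f" using f unfolding constants_def PT_def by auto
  have pg: "PT A g" using g unfolding constants_def PT_def by auto
  have "PT A (f \<circ> g)" using pf pg unfolding PT_def by auto
  then show "restrict (f \<circ> g) A \<in> insert (restrict id A) (constants A)"
    using memT by blast
qed

lemma clone_T:
  assumes ne: "A \<noteq> {}"
  shows "clone A (star A (insert (restrict id A) (constants A)))"
  unfolding clone_def
proof (intro conjI allI impI)
  show "star A (insert (restrict id A) (constants A)) \<subseteq> ops A"
    unfolding star_def by auto
next
  fix n i :: nat assume ni: "1 \<le> n \<and> i < n"
  have ops: "(n, projection A n i) \<in> ops A"
    unfolding ops_def projection_def tuples_def using ni by auto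
  have "PT A (\<lambda>x. projection A n i (as[k:=x]))" if as: "as \<in> tuples A n" and k: "k < n" for as k
  proof -
    have len: "length as = n" and sa: "set as \<subseteq> A" using as unfolding tuples_def by auto
    have e: "projection A n i (as[k:=x]) = (if k = i then x else as ! i)" if "x \<in> A" for x
      using tuples_upd[OF as that, of k] len k ni
      unfolding projection_def by (auto simp: nth_list_update)
    have "as ! i \<in> A" using sa len ni by auto
    then have "PT A (\<lambda>x. if k = i then x else as ! i)" unfolding PT_def by auto
    then show ?thesis by (rule PT_cong') (simp add: e)
  qed
  then show "(n, projection A n i) \<in> star A (insert (restrict id A) (constants A))"
    using ops star_iff by blast
next
  fix n f m gs
  assume H: "(n, f) \<in> star A (insert (restrict id A) (constants A)) \<and> length gs = n \<and>
       (\<forall>g\<in>set gs. (m, g) \<in> star A (insert (restrict id A) (constants A)))"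
  let ?h = "restrict (\<lambda>xs. f (map (\<lambda>g. g xs) gs)) (tuples A m)"
  have fops: "(n, f) \<in> ops A" and ftr: "\<And>as i. as \<in> tuples A n \<Longrightarrow> i < n \<Longrightarrow> PT A (\<lambda>x. f (as[i:=x]))"
    using H star_iff by blast+
  have n1: "n \<ge> 1" and fA: "f \<in> tuples A n \<rightarrow>\<^sub>E A" using fops unfolding ops_def by auto
  have len: "length gs = n" using H by blast
  have gops: "\<And>g. g \<in> set gs \<Longrightarrow> (m, g) \<in> ops A" and
    gtr: "\<And>g as i. g \<in> set gs \<Longrightarrow> as \<in> tuples A m \<Longrightarrow> i < m \<Longrightarrow> PT A (\<lambda>x. g (as[i:=x]))"
    using H star_iff by blast+
  have gA: "\<And>g. g \<in> set gs \<Longrightarrow> g \<in> tuples A m \<rightarrow>\<^sub>E A" using gops unfolding ops_def by auto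
  have "gs \<noteq> []" using len n1 by auto
  then have "hd gs \<in> set gs" by simp
  then have m1: "m \<ge> 1" using gops unfolding ops_def by auto
  have mapT: "map (\<lambda>g. g xs) gs \<in> tuples A n" if "xs \<in> tuples A m" for xs
    using gA that len unfolding tuples_def by auto
  have hops: "(m, ?h) \<in> ops A"
    unfolding ops_def using m1 mapT fA by auto
  have "PT A (\<lambda>x. ?h (xs[j:=x]))" if xs: "xs \<in> tuples A m" and j: "j < m" for xs j
  proof -
    obtain a0 where a0: "a0 \<in> A" using ne by blast
    define S where "S = {i. i < n \<and> (\<forall>x\<in>A. (gs ! i) (xs[j:=x]) = x)}"
    define as where "as = map (\<lambda>g. g (xs[j:=a0])) gs"
    have asT: "as \<in> tuples A n" unfolding as_def using mapT[OF tuples_upd[OF xs a0]] .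
    have finS: "finite S" "S \<subseteq> {..<n}" unfolding S_def by auto
    have PTf: "PT A (\<lambda>x. f (fill as S x))"
      using fill_main[OF ne fA ftr finS asT] by blast
    have "?h (xs[j:=x]) = f (fill as S x)" if x: "x \<in> A" for x
    proof -
      have "map (\<lambda>g. g (xs[j:=x])) gs = fill as S x"
      proof (rule nth_equalityI)
        show "length (map (\<lambda>g. g (xs[j:=x])) gs) = length (fill as S x)"
          unfolding as_def by simp
        fix i assume "i < length (map (\<lambda>g. g (xs[j:=x])) gs)"
        then have i: "i < n" using len by simp
        have gi: "gs ! i \<in> set gs" using i len by simp
        have pt: "PT A (\<lambda>x. (gs ! i) (xs[j:=x]))" using gtr[OF gi xs j] .
        show "map (\<lambda>g. g (xs[j:=x])) gs ! i = fill as S x ! i"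
        proof (cases "i \<in> S")
          case True
          then show ?thesis using i len x unfolding S_def as_def by (simp add: nth_fill)
        next
          case False
          then obtain c where "\<forall>y\<in>A. (gs ! i) (xs[j:=y]) = c"
            using pt i unfolding S_def PT_def by auto
          then show ?thesis using False i len x a0 unfolding as_def by (simp add: nth_fill)
        qed
      qed
      then show ?thesis using tuples_upd[OF xs x] by simp
    qed
    then have e2: "\<And>x. x \<in> A \<Longrightarrow> ?h (xs[j:=x]) = f (fill as S x)" by blast
    show ?thesis by (rule PT_cong'[OF PTf]) (erule e2)
  qed
  then show "(m, ?h) \<in> star A (insert (restrict id A) (constants A))"
    using hops star_iff by blast
qed

theorem proposition5p1:
  fixes A :: "'a set"
  assumes "finite A" and "A \<noteq> {}"
  shows "u_closed A (insert (restrict id A) (constants A))"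
proof -
  let ?T = "insert (restrict id A) (constants A)"
  have "?T \<in> {N. ?T \<subseteq> N \<and> monoid_on A N \<and> clone A (star A N)}"
    using monoid_T clone_T[OF assms(2)] by blast
  then have "u_closure A ?T \<subseteq> ?T" unfolding u_closure_def by blast
  moreover have "?T \<subseteq> u_closure A ?T" unfolding u_closure_def by blast
  ultimately show ?thesis unfolding u_closed_def by blast
qed

end
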